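(* Let $E$ be a finite non-empty subset of $\Theta$, and let $0<\delta<\epsilon$. Assume $E\setminus S^\epsilon(E)\neq\emptyset$ and that there exist $b_1,b_2>0$ such that for every $t\in\mathbb R$ and all $\theta,\theta'\in E$: $$\mathcal M(\theta,\theta',t,Y)\le\exp\Big(\mathbb E[\Gamma(\theta,\theta',X,Y)\mid Y]\,t+\frac{b_1^2t^2}{2}\Big)\quad\text{a.s.},$$ $$\mathbb E\big[\exp\big(t\,\mathbb E[\Gamma(\theta,\theta',X,Y)\mid Y]\big)\big]\le\exp\Big(\mathbb E[\Gamma(\theta,\theta',X,Y)]\,t+\frac{b_2^2t^2}{2}\Big).$$ Then, for every $M,N\ge1$ and every hierarchical sample $(X^{k,l},Y^k)_{1\le k\le M,1\le l\le N}$ of $(X,Y)$, $$\mathbb P\big(\hat S^\delta_{M,N}(E)\not\subset S^\epsilon(E)\big)<|E|\exp\Big(\frac{-M(\epsilon-\delta)^2}{2(b_1^2/N+b_2^2)}\Big).$$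
   Context: $X$ and $Y$ are random variables with values in measurable spaces $\mathcal X$ and $\mathcal Y$. A hierarchical sample of size $M\times N$ of $(X,Y)$ consists of random variables $Y^1,\dots,Y^M$ and $X^{k,l}$, $1\le k\le M$, $1\le l\le N$, such that the blocks $(Y^k,X^{k,1},\dots,X^{k,N})$ are i.i.d. over $k$, each $Y^k$ has the law of $Y$, and, conditionally on $Y^k$, $X^{k,1},\dots,X^{k,N}$ are i.i.d. with the conditional law of $X$ given $Y=Y^k$. $\Theta\subset\mathbb R^d$ is a parameter set and $g:\Theta\times\mathcal X\times\mathcal Y\to\mathbb R$ is measurable with $g(\theta,X,Y)$ integrable for every $\theta$. Define $G(\theta)=\mathbb E[g(\theta,X,Y)]$ and $\hat G_{M,N}(\theta)=\frac1{MN}\sum_{k=1}^M\sum_{l=1}^N g(\theta,X^{k,l},Y^k)$. For $\epsilon>0$ and non-empty $E\subset\Theta$ (on which the minima below are attained), $S^\epsilon(E)=\{\theta\in E: G(\theta)\le\min_E G+\epsilon\}$ and $\hat S^\epsilon_{M,N}(E)=\{\theta\in E:\hat G_{M,N}(\theta)\le\min_E\hat G_{M,N}+\epsilon\}$. For $\theta,\theta'\in\Theta$, $t\in\mathbb R$, $y\in\mathcal Y$: $\Gamma(\theta,\theta',X,Y)=g(\theta',X,Y)-g(\theta,X,Y)$ and $\mathcal M(\theta,\theta',t,y)=\mathbb E[\exp(t\Gamma(\theta,\theta',X,Y))\mid Y=y]$. *)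

theory Defs
  imports "HOL-Probability.Probability"
begin

definition sigmaY :: "'w measure \<Rightarrow> ('w \<Rightarrow> 'y) \<Rightarrow> 'y measure \<Rightarrow> 'w measure" where
  "sigmaY M Y MY = vimage_algebra (space M) Y MY"

definition Gfun :: "'w measure \<Rightarrow> ('w \<Rightarrow> 'x) \<Rightarrow> ('w \<Rightarrow> 'y) \<Rightarrow> ('t \<Rightarrow> 'x \<Rightarrow> 'y \<Rightarrow> real) \<Rightarrow> 't \<Rightarrow> real" where
  "Gfun M X Y g \<theta> = (\<integral>\<omega>. g \<theta> (X \<omega>) (Y \<omega>) \<partial>M)"

definition Gam :: "('w \<Rightarrow> 'x) \<Rightarrow> ('w \<Rightarrow> 'y) \<Rightarrow> ('t \<Rightarrow> 'x \<Rightarrow> 'y \<Rightarrow> real) \<Rightarrow> 't \<Rightarrow> 't \<Rightarrow> 'w \<Rightarrow> real" where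
  "Gam X Y g \<theta> \<theta>' \<omega> = g \<theta>' (X \<omega>) (Y \<omega>) - g \<theta> (X \<omega>) (Y \<omega>)"

text \<open>Hierarchical sample of size Mn x N (indices 0-based: k < Mn, l < N) defined on a
  probability space P: measurability, independence of the blocks over k, and the law of each
  block (Y^k, X^{k,0..N-1}) equals that of (Y, N conditionally i.i.d. copies of X given Y),
  characterised by E[h(Y^k) prod_l f_l(X^{k,l})] = E[h(Y) prod_l E[f_l(X) | Y]]
  for all bounded measurable h, f_l.\<close>
definition hier_sample ::
  "'w measure \<Rightarrow> 'x measure \<Rightarrow> 'y measure \<Rightarrow> ('w \<Rightarrow> 'x) \<Rightarrow> ('w \<Rightarrow> 'y) \<Rightarrow>
   'p measure \<Rightarrow> nat \<Rightarrow> nat \<Rightarrow> (nat \<Rightarrow> 'p \<Rightarrow> 'y) \<Rightarrow> (nat \<Rightarrow> nat \<Rightarrow> 'p \<Rightarrow> 'x) \<Rightarrow> bool" where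
  "hier_sample M MX MY X Y P Mn N Ys Xs \<longleftrightarrow>
     prob_space P \<and>
     (\<forall>k<Mn. Ys k \<in> measurable P MY) \<and>
     (\<forall>k<Mn. \<forall>l<N. Xs k l \<in> measurable P MX) \<and>
     prob_space.indep_vars P (\<lambda>k. MY \<Otimes>\<^sub>M PiM {..<N} (\<lambda>_. MX))
        (\<lambda>k \<omega>. (Ys k \<omega>, \<lambda>l\<in>{..<N}. Xs k l \<omega>)) {..<Mn} \<and>
     (\<forall>h f. h \<in> borel_measurable MY \<longrightarrow> (\<exists>B. \<forall>y. \<bar>h y\<bar> \<le> B) \<longrightarrow>
        (\<forall>l<N. f l \<in> borel_measurable MX \<and> (\<exists>B. \<forall>x. \<bar>f l x\<bar> \<le> B)) \<longrightarrow>
        (\<forall>k<Mn. (\<integral>\<omega>. h (Ys k \<omega>) * (\<Prod>l<N. f l (Xs k l \<omega>)) \<partial>P) =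
                 (\<integral>\<omega>. h (Y \<omega>) * (\<Prod>l<N. real_cond_exp M (sigmaY M Y MY) (\<lambda>\<omega>'. f l (X \<omega>')) \<omega>) \<partial>M)))"

definition Ghat :: "nat \<Rightarrow> nat \<Rightarrow> (nat \<Rightarrow> 'p \<Rightarrow> 'y) \<Rightarrow> (nat \<Rightarrow> nat \<Rightarrow> 'p \<Rightarrow> 'x) \<Rightarrow>
    ('t \<Rightarrow> 'x \<Rightarrow> 'y \<Rightarrow> real) \<Rightarrow> 'p \<Rightarrow> 't \<Rightarrow> real" where
  "Ghat Mn N Ys Xs g \<omega> \<theta> = (1 / (real Mn * real N)) * (\<Sum>k<Mn. \<Sum>l<N. g \<theta> (Xs k l \<omega>) (Ys k \<omega>))"

text \<open>epsilon-optimal set of a function F on E (E finite non-empty, so the min exists)\<close>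
definition eps_opt :: "('t \<Rightarrow> real) \<Rightarrow> real \<Rightarrow> 't set \<Rightarrow> 't set" where
  "eps_opt F \<epsilon> E = {\<theta>\<in>E. F \<theta> \<le> Min (F ` E) + \<epsilon>}"

end

theory Submission
  imports Defs
begin


lemma subalg_sigmaY:
  assumes "Y \<in> measurable M MY"
  shows "subalgebra M (sigmaY M Y MY)"
  using assms unfolding subalgebra_def sigmaY_def measurable_iff_sets by auto

lemma meas_sigmaY:
  assumes "Y \<in> measurable M MY" "h \<in> measurable MY N"
  shows "(\<lambda>\<omega>. h (Y \<omega>)) \<in> measurable (sigmaY M Y MY) N"
proof -
  have "Y \<in> measurable (sigmaY M Y MY) MY"
    unfolding sigmaY_def using assms(1) by (intro measurable_vimage_algebra1) (auto simp: measurable_def)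
  then show ?thesis using assms(2) by (rule measurable_compose)
qed

locale blk =
  fixes M :: "'w measure" and MX :: "'x measure" and MY :: "'y measure"
    and X :: "'w \<Rightarrow> 'x" and Y :: "'w \<Rightarrow> 'y" and P :: "'p measure" and N :: nat
    and Yk :: "'p \<Rightarrow> 'y" and Xk :: "nat \<Rightarrow> 'p \<Rightarrow> 'x"
  assumes M: "prob_space M" and X[measurable]: "X \<in> measurable M MX" and Y[measurable]: "Y \<in> measurable M MY"
    and P: "prob_space P" and Yk[measurable]: "Yk \<in> measurable P MY" and Xk[measurable]: "\<And>l. Xk l \<in> measurable P MX"
    and law: "\<And>h f. h \<in> borel_measurable MY \<Longrightarrow> (\<exists>B. \<forall>y. \<bar>h y\<bar> \<le> B) \<Longrightarrow>
       (\<forall>l<N. f l \<in> borel_measurable MX \<and> (\<exists>B. \<forall>x. \<bar>f l x\<bar> \<le> B)) \<Longrightarrow>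
       (\<integral>\<omega>. h (Yk \<omega>) * (\<Prod>l<N. f l (Xk l \<omega>)) \<partial>P) =
       (\<integral>\<omega>. h (Y \<omega>) * (\<Prod>l<N. real_cond_exp M (sigmaY M Y MY) (\<lambda>\<omega>'. f l (X \<omega>')) \<omega>) \<partial>M)"
begin

sublocale PM: prob_space M by (rule M)
sublocale PP: prob_space P by (rule P)
sublocale FS: finite_measure_subalgebra M "sigmaY M Y MY"
  by (intro finite_measure_subalgebra.intro finite_measure_subalgebra_axioms.intro subalg_sigmaY Y)
     (rule PM.finite_measure_axioms)

abbreviation "F \<equiv> sigmaY M Y MY"

lemma measF: "h \<in> measurable MY N' \<Longrightarrow> (\<lambda>\<omega>. h (Y \<omega>)) \<in> measurable F N'"
  by (rule meas_sigmaY[OF Y])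

definition LHS :: "(nat \<Rightarrow> 'x \<times> 'y \<Rightarrow> ennreal) \<Rightarrow> ennreal" where
  "LHS \<phi> = (\<integral>\<^sup>+\<omega>. (\<Prod>l<N. \<phi> l (Xk l \<omega>, Yk \<omega>)) \<partial>P)"
definition RHS :: "(nat \<Rightarrow> 'x \<times> 'y \<Rightarrow> ennreal) \<Rightarrow> ennreal" where
  "RHS \<phi> = (\<integral>\<^sup>+\<omega>. (\<Prod>l<N. nn_cond_exp M F (\<lambda>\<omega>. \<phi> l (X \<omega>, Y \<omega>)) \<omega>) \<partial>M)"
definition rect :: "('x \<times> 'y \<Rightarrow> ennreal) \<Rightarrow> bool" where
  "rect \<psi> \<longleftrightarrow> (\<exists>A\<in>sets MX. \<exists>B\<in>sets MY. \<psi> = indicator (A \<times> B))"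

lemma rce_ind:
  assumes A: "A \<in> sets MX"
  shows "AE \<omega> in M. nn_cond_exp M F (\<lambda>\<omega>. indicator A (X \<omega>)) \<omega> = ennreal (real_cond_exp M F (\<lambda>\<omega>. indicator A (X \<omega>)) \<omega>)
     \<and> 0 \<le> real_cond_exp M F (\<lambda>\<omega>. indicator A (X \<omega>)) \<omega> \<and> real_cond_exp M F (\<lambda>\<omega>. indicator A (X \<omega>)) \<omega> \<le> 1"
proof -
  have 1: "AE \<omega> in M. (\<lambda>_. 0::ennreal) \<omega> = nn_cond_exp M F (\<lambda>_. 0) \<omega>"
    by (rule FS.nn_cond_exp_F_meas) simp
  have 2: "AE \<omega> in M. (\<lambda>_. 1::ennreal) \<omega> = nn_cond_exp M F (\<lambda>_. 1) \<omega>"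
    by (rule FS.nn_cond_exp_F_meas) simp
  have 3: "AE \<omega> in M. nn_cond_exp M F (\<lambda>\<omega>. indicator A (X \<omega>)) \<omega> \<le> nn_cond_exp M F (\<lambda>_. 1) \<omega>"
    by (rule FS.nn_cond_exp_mono) (use A in \<open>auto simp: indicator_def\<close>)
  have e1: "(\<lambda>\<omega>. ennreal (indicator A (X \<omega>))) = (\<lambda>\<omega>. indicator A (X \<omega>))"
    by (auto simp: ennreal_indicator)
  have e2: "(\<lambda>\<omega>. ennreal (- indicator A (X \<omega>))) = (\<lambda>_. 0)"
    by (auto simp: indicator_def ennreal_neg)
  show ?thesis
    using 1 2 3
  proof eventually_elim
    case (elim \<omega>)
    then have le1: "nn_cond_exp M F (\<lambda>\<omega>. indicator A (X \<omega>)) \<omega> \<le> 1" by simp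
    then have "nn_cond_exp M F (\<lambda>\<omega>. indicator A (X \<omega>)) \<omega> \<noteq> \<top>"
      by (metis ennreal_one_neq_top neq_top_trans)
    moreover have "real_cond_exp M F (\<lambda>\<omega>. indicator A (X \<omega>)) \<omega> = enn2real (nn_cond_exp M F (\<lambda>\<omega>. indicator A (X \<omega>)) \<omega>)"
      unfolding real_cond_exp_def e1 e2 using elim(1)[symmetric] by simp
    ultimately show ?case using le1
      by (auto simp: less_top intro!: enn2real_leI)
  qed
qed

lemma prod_ind_enn:
  "(\<Prod>l<N. (indicator (A l \<times> B l) (x l, y) :: ennreal)) = (if \<forall>l<N. x l \<in> A l \<and> y \<in> B l then 1 else 0)"
proof (cases "\<forall>l<N. x l \<in> A l \<and> y \<in> B l")
  case True then show ?thesis by (auto intro!: prod.neutral simp: indicator_def)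
next
  case False
  then obtain l where "l < N" "\<not> (x l \<in> A l \<and> y \<in> B l)" by auto
  then have "(\<Prod>l<N. (indicator (A l \<times> B l) (x l, y) :: ennreal)) = 0"
    by (intro prod_zero) (auto intro!: bexI[of _ l] simp: indicator_def)
  then show ?thesis using False by simp
qed

lemma prod_ind_real:
  assumes "y \<in> S"
  shows "(indicator (S \<inter> (\<Inter>l\<in>{..<N}. B l)) y :: real) * (\<Prod>l<N. indicator (A l) (x l)) = (if \<forall>l<N. x l \<in> A l \<and> y \<in> B l then 1 else 0)"
proof (cases "\<forall>l<N. x l \<in> A l \<and> y \<in> B l")
  case True then show ?thesis using assms by (auto intro!: prod.neutral simp: indicator_def)
next
  case False
  then obtain l where l: "l < N" "\<not> (x l \<in> A l \<and> y \<in> B l)" by auto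
  show ?thesis
  proof (cases "x l \<in> A l")
    case True
    then have "y \<notin> B l" using l by auto
    then show ?thesis using False l by (auto simp: indicator_def)
  next
    case False
    then have "(\<Prod>l<N. (indicator (A l) (x l) :: real)) = 0"
      using l by (intro prod_zero) (auto intro!: bexI[of _ l] simp: indicator_def)
    then show ?thesis using l(1) \<open>x l \<notin> A l\<close> by auto
  qed
qed

lemma base:
  assumes R: "\<And>l. l < N \<Longrightarrow> rect (\<phi> l)"
  shows "LHS \<phi> = RHS \<phi>"
proof -
  from R obtain A B where AB: "\<And>l. l < N \<Longrightarrow> A l \<in> sets MX \<and> B l \<in> sets MY \<and> \<phi> l = indicator (A l \<times> B l)"
    unfolding rect_def by metis
  define S where "S = space MY \<inter> (\<Inter>l\<in>{..<N}. B l)"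
  have S[measurable]: "S \<in> sets MY"
    unfolding S_def using AB by (cases "N = 0") (auto intro!: sets.Int sets.finite_INT)
  have A[measurable]: "A l \<in> sets MX" if "l < N" for l using AB that by auto
  have B[measurable]: "B l \<in> sets MY" if "l < N" for l using AB that by auto
  define h :: "'y \<Rightarrow> real" where "h = indicator S"
  define f :: "nat \<Rightarrow> 'x \<Rightarrow> real" where "f l = indicator (A l)" for l
  let ?r = "\<lambda>l. real_cond_exp M F (\<lambda>\<omega>'. f l (X \<omega>'))"
  have hm[measurable]: "h \<in> borel_measurable MY" unfolding h_def by simp
  have fm: "\<forall>l<N. f l \<in> borel_measurable MX \<and> (\<exists>B. \<forall>x. \<bar>f l x\<bar> \<le> B)"
    unfolding f_def using A by (auto intro!: exI[of _ 1] simp: indicator_def)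
  have lawE: "(\<integral>\<omega>. h (Yk \<omega>) * (\<Prod>l<N. f l (Xk l \<omega>)) \<partial>P) = (\<integral>\<omega>. h (Y \<omega>) * (\<Prod>l<N. ?r l \<omega>) \<partial>M)"
    by (rule law[OF hm _ fm]) (auto simp: h_def indicator_def intro!: exI[of _ 1])
  have measP: "(\<lambda>\<omega>. h (Yk \<omega>) * (\<Prod>l<N. f l (Xk l \<omega>))) \<in> borel_measurable P"
  proof -
    have "(\<lambda>\<omega>. (\<Prod>l<N. f l (Xk l \<omega>))) \<in> borel_measurable P"
      using fm by (intro borel_measurable_prod) (auto intro: measurable_compose[OF Xk])
    then show ?thesis by simp
  qed
  have "LHS \<phi> = (\<integral>\<^sup>+\<omega>. ennreal (h (Yk \<omega>) * (\<Prod>l<N. f l (Xk l \<omega>))) \<partial>P)"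
    unfolding LHS_def
  proof (intro nn_integral_cong)
    fix \<omega> assume \<omega>: "\<omega> \<in> space P"
    then have "Yk \<omega> \<in> space MY" using Yk by (auto simp: measurable_def)
    have "(\<Prod>l<N. \<phi> l (Xk l \<omega>, Yk \<omega>)) = (\<Prod>l<N. (indicator (A l \<times> B l) (Xk l \<omega>, Yk \<omega>) :: ennreal))"
      using AB by (intro prod.cong) auto
    also have "\<dots> = ennreal (h (Yk \<omega>) * (\<Prod>l<N. f l (Xk l \<omega>)))"
      unfolding prod_ind_enn h_def f_def S_def prod_ind_real[OF \<open>Yk \<omega> \<in> space MY\<close>] by simp
    finally show "(\<Prod>l<N. \<phi> l (Xk l \<omega>, Yk \<omega>)) = ennreal (h (Yk \<omega>) * (\<Prod>l<N. f l (Xk l \<omega>)))" .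
  qed
  also have "\<dots> = ennreal (\<integral>\<omega>. h (Yk \<omega>) * (\<Prod>l<N. f l (Xk l \<omega>)) \<partial>P)"
  proof (rule nn_integral_eq_integral)
    show "integrable P (\<lambda>\<omega>. h (Yk \<omega>) * (\<Prod>l<N. f l (Xk l \<omega>)))"
      by (rule PP.integrable_const_bound[where B=1]) (use measP in \<open>auto simp: h_def f_def indicator_def abs_prod intro!: prod_le_1\<close>)
    show "AE x in P. 0 \<le> h (Yk x) * (\<Prod>l<N. f l (Xk l x))"
      by (auto simp: h_def f_def indicator_def intro!: prod_nonneg)
  qed
  also have "\<dots> = ennreal (\<integral>\<omega>. h (Y \<omega>) * (\<Prod>l<N. ?r l \<omega>) \<partial>M)" using lawE by simp
  also have "\<dots> = RHS \<phi>"
  proof -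
    have AEl: "AE \<omega> in M. \<forall>l\<in>{..<N}. nn_cond_exp M F (\<lambda>\<omega>. \<phi> l (X \<omega>, Y \<omega>)) \<omega> = ennreal (indicator (B l) (Y \<omega>)) * ennreal (?r l \<omega>)
        \<and> 0 \<le> ?r l \<omega> \<and> ?r l \<omega> \<le> 1"
    proof (rule AE_finite_allI, simp)
      fix l assume l: "l \<in> {..<N}"
      then have l': "l < N" by simp
      have e: "(\<lambda>\<omega>. \<phi> l (X \<omega>, Y \<omega>)) = (\<lambda>\<omega>. indicator (B l) (Y \<omega>) * indicator (A l) (X \<omega>))"
        using AB[OF l'] by (auto simp: indicator_times mult.commute)
      have p: "AE \<omega> in M. indicator (B l) (Y \<omega>) * nn_cond_exp M F (\<lambda>\<omega>. indicator (A l) (X \<omega>)) \<omega> =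
          nn_cond_exp M F (\<lambda>\<omega>. indicator (B l) (Y \<omega>) * indicator (A l) (X \<omega>)) \<omega>"
        by (rule FS.nn_cond_exp_prod) (auto intro!: measF simp: l')
      show "AE \<omega> in M. nn_cond_exp M F (\<lambda>\<omega>. \<phi> l (X \<omega>, Y \<omega>)) \<omega> = ennreal (indicator (B l) (Y \<omega>)) * ennreal (?r l \<omega>)
        \<and> 0 \<le> ?r l \<omega> \<and> ?r l \<omega> \<le> 1"
        using p rce_ind[OF A[OF l']]
        by eventually_elim (auto simp: e f_def ennreal_indicator)
    qed
    have "RHS \<phi> = (\<integral>\<^sup>+\<omega>. ennreal (h (Y \<omega>) * (\<Prod>l<N. ?r l \<omega>)) \<partial>M)"
      unfolding RHS_def
    proof (rule nn_integral_cong_AE)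
      show "AE \<omega> in M. (\<Prod>l<N. nn_cond_exp M F (\<lambda>\<omega>. \<phi> l (X \<omega>, Y \<omega>)) \<omega>) = ennreal (h (Y \<omega>) * (\<Prod>l<N. ?r l \<omega>))"
        using AEl
      proof (rule AE_mp, intro AE_I2 impI)
        fix \<omega> assume \<omega>: "\<omega> \<in> space M" and H: "\<forall>l\<in>{..<N}. nn_cond_exp M F (\<lambda>\<omega>. \<phi> l (X \<omega>, Y \<omega>)) \<omega> = ennreal (indicator (B l) (Y \<omega>)) * ennreal (?r l \<omega>)
        \<and> 0 \<le> ?r l \<omega> \<and> ?r l \<omega> \<le> 1"
        have Ys: "Y \<omega> \<in> space MY" using \<omega> Y by (auto simp: measurable_def)
        have "(\<Prod>l<N. nn_cond_exp M F (\<lambda>\<omega>. \<phi> l (X \<omega>, Y \<omega>)) \<omega>) = (\<Prod>l<N. ennreal (indicator (B l) (Y \<omega>) * ?r l \<omega>))"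
          using H by (intro prod.cong) (auto simp: ennreal_mult)
        also have "\<dots> = ennreal (\<Prod>l<N. indicator (B l) (Y \<omega>) * ?r l \<omega>)"
          using H by (intro prod_ennreal) auto
        also have "(\<Prod>l<N. indicator (B l) (Y \<omega>) * ?r l \<omega>) = (\<Prod>l<N. indicator (B l) (Y \<omega>)) * (\<Prod>l<N. ?r l \<omega>)"
          by (rule prod.distrib)
        also have "(\<Prod>l<N. indicator (B l) (Y \<omega>) :: real) = h (Y \<omega>)"
          using prod_ind_real[OF Ys, where B=B and A="\<lambda>_. UNIV" and x="\<lambda>_. undefined"]
          by (auto simp: h_def S_def indicator_def)
        finally show "(\<Prod>l<N. nn_cond_exp M F (\<lambda>\<omega>. \<phi> l (X \<omega>, Y \<omega>)) \<omega>) = ennreal (h (Y \<omega>) * (\<Prod>l<N. ?r l \<omega>))" .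
      qed
    qed
    also have "\<dots> = ennreal (\<integral>\<omega>. h (Y \<omega>) * (\<Prod>l<N. ?r l \<omega>) \<partial>M)"
    proof (rule nn_integral_eq_integral)
      show "integrable M (\<lambda>\<omega>. h (Y \<omega>) * (\<Prod>l<N. ?r l \<omega>))"
      proof (rule PM.integrable_const_bound[where B=1])
        show "AE x in M. norm (h (Y x) * (\<Prod>l<N. ?r l x)) \<le> 1"
          using AEl by eventually_elim
            (auto simp: h_def indicator_def abs_prod intro!: prod_le_1 mult_le_one)
      qed simp
      show "AE x in M. 0 \<le> h (Y x) * (\<Prod>l<N. ?r l x)"
        using AEl by eventually_elim (auto simp: h_def intro!: prod_nonneg mult_nonneg_nonneg)
    qed
    finally show ?thesis by simp
  qed
  finally show ?thesis .
qed

definition bnd :: "(nat \<Rightarrow> 'x \<times> 'y \<Rightarrow> ennreal) \<Rightarrow> bool" where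
  "bnd \<phi> \<longleftrightarrow> (\<exists>c. \<forall>l z. \<phi> l z \<le> ennreal c)"

lemma step:
  assumes IH: "\<And>\<phi>. (\<And>l. \<phi> l \<in> borel_measurable (MX \<Otimes>\<^sub>M MY)) \<Longrightarrow> bnd \<phi> \<Longrightarrow>
      (\<And>l. j \<le> l \<Longrightarrow> l < N \<Longrightarrow> rect (\<phi> l)) \<Longrightarrow> LHS \<phi> = RHS \<phi>"
    and meas[measurable]: "\<And>l. \<phi> l \<in> borel_measurable (MX \<Otimes>\<^sub>M MY)" and bd: "bnd \<phi>"
    and R: "\<And>l. Suc j \<le> l \<Longrightarrow> l < N \<Longrightarrow> rect (\<phi> l)"
  shows "LHS \<phi> = RHS \<phi>"
proof (cases "j < N")
  case False
  then show ?thesis using R by (intro IH meas bd) auto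
next
  case True
  from bd obtain c where c: "\<And>l z. \<phi> l z \<le> ennreal c" unfolding bnd_def by auto
  define I where "I = {..<N} - {j}"
  define wL where "wL \<omega> = (\<Prod>l\<in>I. \<phi> l (Xk l \<omega>, Yk \<omega>))" for \<omega>
  define wR where "wR \<omega> = (\<Prod>l\<in>I. nn_cond_exp M F (\<lambda>\<omega>. \<phi> l (X \<omega>, Y \<omega>)) \<omega>)" for \<omega>
  have wL_m[measurable]: "wL \<in> borel_measurable P" unfolding wL_def by measurable
  have wR_m[measurable]: "wR \<in> borel_measurable F" unfolding wR_def by measurable
  have wR_m2[measurable]: "wR \<in> borel_measurable M" unfolding wR_def by measurable
  define \<mu>L where "\<mu>L = distr (density P wL) (MX \<Otimes>\<^sub>M MY) (\<lambda>\<omega>. (Xk j \<omega>, Yk \<omega>))"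
  define \<mu>R where "\<mu>R = distr (density M wR) (MX \<Otimes>\<^sub>M MY) (\<lambda>\<omega>. (X \<omega>, Y \<omega>))"
  have jN: "j \<in> {..<N}" using True by simp
  have keyL: "LHS (\<phi>(j := \<psi>)) = (\<integral>\<^sup>+z. \<psi> z \<partial>\<mu>L)" if [measurable]: "\<psi> \<in> borel_measurable (MX \<Otimes>\<^sub>M MY)" for \<psi>
  proof -
    have "LHS (\<phi>(j := \<psi>)) = (\<integral>\<^sup>+\<omega>. wL \<omega> * \<psi> (Xk j \<omega>, Yk \<omega>) \<partial>P)"
      unfolding LHS_def
    proof (intro nn_integral_cong)
      fix \<omega>
      have "(\<Prod>l<N. (\<phi>(j := \<psi>)) l (Xk l \<omega>, Yk \<omega>)) = (\<phi>(j := \<psi>)) j (Xk j \<omega>, Yk \<omega>) * (\<Prod>l\<in>I. (\<phi>(j := \<psi>)) l (Xk l \<omega>, Yk \<omega>))"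
        unfolding I_def by (rule prod.remove[OF _ jN]) simp
      also have "(\<Prod>l\<in>I. (\<phi>(j := \<psi>)) l (Xk l \<omega>, Yk \<omega>)) = wL \<omega>"
        unfolding wL_def by (intro prod.cong) (auto simp: I_def)
      finally show "(\<Prod>l<N. (\<phi>(j := \<psi>)) l (Xk l \<omega>, Yk \<omega>)) = wL \<omega> * \<psi> (Xk j \<omega>, Yk \<omega>)"
        by (simp add: mult.commute)
    qed
    also have "\<dots> = (\<integral>\<^sup>+\<omega>. \<psi> (Xk j \<omega>, Yk \<omega>) \<partial>density P wL)"
      by (rule nn_integral_density[symmetric]) simp_all
    also have "\<dots> = (\<integral>\<^sup>+z. \<psi> z \<partial>\<mu>L)"
      unfolding \<mu>L_def by (rule nn_integral_distr[symmetric]) simp_all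
    finally show ?thesis .
  qed
  have keyR: "RHS (\<phi>(j := \<psi>)) = (\<integral>\<^sup>+z. \<psi> z \<partial>\<mu>R)" if [measurable]: "\<psi> \<in> borel_measurable (MX \<Otimes>\<^sub>M MY)" for \<psi>
  proof -
    have "RHS (\<phi>(j := \<psi>)) = (\<integral>\<^sup>+\<omega>. wR \<omega> * nn_cond_exp M F (\<lambda>\<omega>. \<psi> (X \<omega>, Y \<omega>)) \<omega> \<partial>M)"
      unfolding RHS_def
    proof (intro nn_integral_cong)
      fix \<omega>
      have "(\<Prod>l<N. nn_cond_exp M F (\<lambda>\<omega>. (\<phi>(j := \<psi>)) l (X \<omega>, Y \<omega>)) \<omega>) =
         nn_cond_exp M F (\<lambda>\<omega>. (\<phi>(j := \<psi>)) j (X \<omega>, Y \<omega>)) \<omega> * (\<Prod>l\<in>I. nn_cond_exp M F (\<lambda>\<omega>. (\<phi>(j := \<psi>)) l (X \<omega>, Y \<omega>)) \<omega>)"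
        unfolding I_def by (rule prod.remove[OF _ jN]) simp
      also have "(\<Prod>l\<in>I. nn_cond_exp M F (\<lambda>\<omega>. (\<phi>(j := \<psi>)) l (X \<omega>, Y \<omega>)) \<omega>) = wR \<omega>"
        unfolding wR_def by (intro prod.cong) (auto simp: I_def)
      finally show "(\<Prod>l<N. nn_cond_exp M F (\<lambda>\<omega>. (\<phi>(j := \<psi>)) l (X \<omega>, Y \<omega>)) \<omega>) = wR \<omega> * nn_cond_exp M F (\<lambda>\<omega>. \<psi> (X \<omega>, Y \<omega>)) \<omega>"
        by (simp add: mult.commute)
    qed
    also have "\<dots> = (\<integral>\<^sup>+\<omega>. wR \<omega> * \<psi> (X \<omega>, Y \<omega>) \<partial>M)"
      by (rule FS.nn_cond_exp_intg) simp_all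
    also have "\<dots> = (\<integral>\<^sup>+\<omega>. \<psi> (X \<omega>, Y \<omega>) \<partial>density M wR)"
      by (rule nn_integral_density[symmetric]) simp_all
    also have "\<dots> = (\<integral>\<^sup>+z. \<psi> z \<partial>\<mu>R)"
      unfolding \<mu>R_def by (rule nn_integral_distr[symmetric]) simp_all
    finally show ?thesis .
  qed
  define E where "E = {a \<times> b |a b. a \<in> sets MX \<and> b \<in> sets MY}"
  define \<Omega> where "\<Omega> = space MX \<times> space MY"
  have sL: "sets \<mu>L = sets (MX \<Otimes>\<^sub>M MY)" unfolding \<mu>L_def by simp
  have sR: "sets \<mu>R = sets (MX \<Otimes>\<^sub>M MY)" unfolding \<mu>R_def by simp
  have eqE: "emeasure \<mu>L Z = emeasure \<mu>R Z" if Z: "Z \<in> E" for Z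
  proof -
    from Z obtain a b where ab: "Z = a \<times> b" "a \<in> sets MX" "b \<in> sets MY" unfolding E_def by auto
    have Zs[measurable]: "Z \<in> sets (MX \<Otimes>\<^sub>M MY)" using ab by auto
    have "emeasure \<mu>L Z = (\<integral>\<^sup>+z. indicator Z z \<partial>\<mu>L)" using sL by simp
    also have "\<dots> = LHS (\<phi>(j := indicator Z))" by (rule keyL[symmetric]) simp
    also have "\<dots> = RHS (\<phi>(j := indicator Z))"
    proof (rule IH)
      show "(\<phi>(j := indicator Z)) l \<in> borel_measurable (MX \<Otimes>\<^sub>M MY)" for l by (cases "l = j") auto
      show "bnd (\<phi>(j := indicator Z))" unfolding bnd_def
        by (rule exI[of _ "max c 1"]) (auto simp: indicator_def intro: order.trans[OF c] ennreal_leI)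
      show "rect ((\<phi>(j := indicator Z)) l)" if "j \<le> l" "l < N" for l
      proof (cases "l = j")
        case True then show ?thesis using ab by (auto simp: rect_def)
      next
        case False then show ?thesis using R that by auto
      qed
    qed
    also have "\<dots> = (\<integral>\<^sup>+z. indicator Z z \<partial>\<mu>R)" by (rule keyR) simp
    also have "\<dots> = emeasure \<mu>R Z" using sR by simp
    finally show ?thesis .
  qed
  have finL: "emeasure \<mu>L \<Omega> \<noteq> \<infinity>"
  proof -
    have \<Omega>s[measurable]: "\<Omega> \<in> sets (MX \<Otimes>\<^sub>M MY)" unfolding \<Omega>_def by (metis space_pair_measure sets.top)
    have "emeasure \<mu>L \<Omega> = (\<integral>\<^sup>+z. indicator \<Omega> z \<partial>\<mu>L)" using sL by simp
    also have "\<dots> = LHS (\<phi>(j := indicator \<Omega>))" by (rule keyL[symmetric]) simp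
    also have "\<dots> \<le> (\<integral>\<^sup>+\<omega>. ennreal (max c 1) ^ N \<partial>P)"
      unfolding LHS_def
    proof (intro nn_integral_mono)
      fix \<omega>
      have "(\<Prod>l<N. (\<phi>(j := indicator \<Omega>)) l (Xk l \<omega>, Yk \<omega>)) \<le> (\<Prod>l<N. ennreal (max c 1))"
        by (intro prod_mono_ennreal) (auto simp: indicator_def intro: order.trans[OF c] ennreal_leI)
      then show "(\<Prod>l<N. (\<phi>(j := indicator \<Omega>)) l (Xk l \<omega>, Yk \<omega>)) \<le> ennreal (max c 1) ^ N" by simp
    qed
    also have "\<dots> = ennreal (max c 1) ^ N" by (simp add: PP.emeasure_space_1)
    also have "\<dots> < \<infinity>" using ennreal_power[of "max c 1" N] by simp
    finally show ?thesis by simp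
  qed
  have "\<mu>L = \<mu>R"
  proof (rule measure_eqI_generator_eq[where \<Omega>=\<Omega> and E=E and A="\<lambda>_. \<Omega>"])
    show "Int_stable E" unfolding E_def by (rule Int_stable_pair_measure_generator)
    show "E \<subseteq> Pow \<Omega>" unfolding E_def \<Omega>_def by (rule pair_measure_closed)
    show "\<And>Z. Z \<in> E \<Longrightarrow> emeasure \<mu>L Z = emeasure \<mu>R Z" by (rule eqE)
    show "sets \<mu>L = sigma_sets \<Omega> E" unfolding sL E_def \<Omega>_def by (rule sets_pair_measure)
    show "sets \<mu>R = sigma_sets \<Omega> E" unfolding sR E_def \<Omega>_def by (rule sets_pair_measure)
    show "range (\<lambda>_. \<Omega>) \<subseteq> E" unfolding E_def \<Omega>_def by auto
    show "(\<Union>i. \<Omega>) = \<Omega>" by simp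
    show "\<And>i. emeasure \<mu>L \<Omega> \<noteq> \<infinity>" by (rule finL)
  qed
  have "LHS \<phi> = LHS (\<phi>(j := \<phi> j))" by simp
  also have "\<dots> = (\<integral>\<^sup>+z. \<phi> j z \<partial>\<mu>L)" by (rule keyL) simp
  also have "\<dots> = (\<integral>\<^sup>+z. \<phi> j z \<partial>\<mu>R)" using \<open>\<mu>L = \<mu>R\<close> by simp
  also have "\<dots> = RHS (\<phi>(j := \<phi> j))" by (rule keyR[symmetric]) simp
  finally show ?thesis by simp
qed

lemma Qj:
  "(\<And>l. \<phi> l \<in> borel_measurable (MX \<Otimes>\<^sub>M MY)) \<Longrightarrow> bnd \<phi> \<Longrightarrow>
      (\<And>l. j \<le> l \<Longrightarrow> l < N \<Longrightarrow> rect (\<phi> l)) \<Longrightarrow> LHS \<phi> = RHS \<phi>"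
proof (induction j arbitrary: \<phi>)
  case 0 then show ?case by (intro base) auto
next
  case (Suc j) show ?case by (rule step[OF Suc.IH]) (use Suc.prems in auto)
qed

lemma allQ: "(\<And>l. \<phi> l \<in> borel_measurable (MX \<Otimes>\<^sub>M MY)) \<Longrightarrow> bnd \<phi> \<Longrightarrow> LHS \<phi> = RHS \<phi>"
  by (rule Qj[where j=N]) auto

lemma block:
  assumes [measurable]: "\<phi>0 \<in> borel_measurable (MX \<Otimes>\<^sub>M MY)" and nn: "\<And>z. 0 \<le> \<phi>0 z"
  shows "(\<integral>\<^sup>+\<omega>. (\<Prod>l<N. ennreal (\<phi>0 (Xk l \<omega>, Yk \<omega>))) \<partial>P)
     \<le> (\<integral>\<^sup>+\<omega>. (\<Prod>l<N. nn_cond_exp M F (\<lambda>\<omega>. ennreal (\<phi>0 (X \<omega>, Y \<omega>))) \<omega>) \<partial>M)"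
proof -
  define \<psi> where "\<psi> n z = ennreal (min (\<phi>0 z) (real n))" for n z
  have \<psi>m[measurable]: "\<psi> n \<in> borel_measurable (MX \<Otimes>\<^sub>M MY)" for n unfolding \<psi>_def by measurable
  have eqn: "LHS (\<lambda>_. \<psi> n) = RHS (\<lambda>_. \<psi> n)" for n
    by (rule allQ) (auto simp: \<psi>_def bnd_def intro!: exI[of _ "real n"] ennreal_leI)
  have leR: "RHS (\<lambda>_. \<psi> n) \<le> (\<integral>\<^sup>+\<omega>. (\<Prod>l<N. nn_cond_exp M F (\<lambda>\<omega>. ennreal (\<phi>0 (X \<omega>, Y \<omega>))) \<omega>) \<partial>M)" for n
    unfolding RHS_def
  proof (rule nn_integral_mono_AE)
    have "AE \<omega> in M. nn_cond_exp M F (\<lambda>\<omega>. \<psi> n (X \<omega>, Y \<omega>)) \<omega> \<le> nn_cond_exp M F (\<lambda>\<omega>. ennreal (\<phi>0 (X \<omega>, Y \<omega>))) \<omega>"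
      by (rule FS.nn_cond_exp_mono) (auto simp: \<psi>_def intro!: ennreal_leI)
    then show "AE \<omega> in M. (\<Prod>l<N. nn_cond_exp M F (\<lambda>\<omega>. \<psi> n (X \<omega>, Y \<omega>)) \<omega>) \<le> (\<Prod>l<N. nn_cond_exp M F (\<lambda>\<omega>. ennreal (\<phi>0 (X \<omega>, Y \<omega>))) \<omega>)"
      by eventually_elim (rule prod_mono_ennreal)
  qed
  have pw: "(\<Prod>l<N. ennreal (\<phi>0 (Xk l \<omega>, Yk \<omega>))) = (SUP n. \<Prod>l<N. \<psi> n (Xk l \<omega>, Yk \<omega>))" for \<omega>
  proof (rule antisym)
    obtain n where n: "(\<Sum>l<N. \<phi>0 (Xk l \<omega>, Yk \<omega>)) \<le> real n" using real_arch_simple by blast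
    have "(\<Prod>l<N. ennreal (\<phi>0 (Xk l \<omega>, Yk \<omega>))) = (\<Prod>l<N. \<psi> n (Xk l \<omega>, Yk \<omega>))"
    proof (intro prod.cong refl)
      fix l assume "l \<in> {..<N}"
      then have "\<phi>0 (Xk l \<omega>, Yk \<omega>) \<le> (\<Sum>l<N. \<phi>0 (Xk l \<omega>, Yk \<omega>))"
        by (intro member_le_sum) (auto simp: nn)
      then show "ennreal (\<phi>0 (Xk l \<omega>, Yk \<omega>)) = \<psi> n (Xk l \<omega>, Yk \<omega>)"
        using n by (simp add: \<psi>_def)
    qed
    also have "\<dots> \<le> (SUP n. \<Prod>l<N. \<psi> n (Xk l \<omega>, Yk \<omega>))" by (rule SUP_upper) simp
    finally show "(\<Prod>l<N. ennreal (\<phi>0 (Xk l \<omega>, Yk \<omega>))) \<le> (SUP n. \<Prod>l<N. \<psi> n (Xk l \<omega>, Yk \<omega>))" .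
    show "(SUP n. \<Prod>l<N. \<psi> n (Xk l \<omega>, Yk \<omega>)) \<le> (\<Prod>l<N. ennreal (\<phi>0 (Xk l \<omega>, Yk \<omega>)))"
      by (intro SUP_least prod_mono_ennreal) (auto simp: \<psi>_def intro!: ennreal_leI)
  qed
  have inc: "incseq (\<lambda>n \<omega>. \<Prod>l<N. \<psi> n (Xk l \<omega>, Yk \<omega>))"
    unfolding incseq_def le_fun_def
    by (auto simp: \<psi>_def intro!: prod_mono_ennreal ennreal_leI)
  have "(\<integral>\<^sup>+\<omega>. (\<Prod>l<N. ennreal (\<phi>0 (Xk l \<omega>, Yk \<omega>))) \<partial>P) = (\<integral>\<^sup>+\<omega>. (SUP n. \<Prod>l<N. \<psi> n (Xk l \<omega>, Yk \<omega>)) \<partial>P)"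
    by (simp add: pw)
  also have "\<dots> = (SUP n. LHS (\<lambda>_. \<psi> n))"
    unfolding LHS_def by (rule nn_integral_monotone_convergence_SUP[OF inc]) simp
  also have "\<dots> \<le> (\<integral>\<^sup>+\<omega>. (\<Prod>l<N. nn_cond_exp M F (\<lambda>\<omega>. ennreal (\<phi>0 (X \<omega>, Y \<omega>))) \<omega>) \<partial>M)"
    using eqn leR by (intro SUP_least) metis
  finally show ?thesis .
qed

end


lemma gamma_comp:
  assumes "(\<lambda>z. \<gamma> (fst z) (snd z)) \<in> borel_measurable (MX \<Otimes>\<^sub>M MY)" "a \<in> measurable L MX" "b \<in> measurable L MY"
  shows "(\<lambda>\<omega>. \<gamma> (a \<omega>) (b \<omega>)) \<in> borel_measurable L"
  using measurable_compose[OF measurable_Pair[OF assms(2,3)] assms(1)] by simp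

lemma ennreal_exp_add: "ennreal (exp (x + y)) = ennreal (exp x) * ennreal (exp y)"
  by (simp add: exp_add ennreal_mult)

lemma chernoff:
  fixes M :: "'w measure" and MX :: "'x measure" and MY :: "'y measure" and X Y
    and P :: "'p measure" and Ys :: "nat \<Rightarrow> 'p \<Rightarrow> 'y" and Xs :: "nat \<Rightarrow> nat \<Rightarrow> 'p \<Rightarrow> 'x"
    and \<gamma> :: "'x \<Rightarrow> 'y \<Rightarrow> real" and \<mu> \<delta> b1 b2 :: real
  assumes M: "prob_space M" and X: "X \<in> measurable M MX" and Y: "Y \<in> measurable M MY"
    and P: "prob_space P" and Ys: "\<And>k. k < Mn \<Longrightarrow> Ys k \<in> measurable P MY"
    and Xs: "\<And>k l. k < Mn \<Longrightarrow> l < N \<Longrightarrow> Xs k l \<in> measurable P MX"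
    and ind: "prob_space.indep_vars P (\<lambda>k. MY \<Otimes>\<^sub>M PiM {..<N} (\<lambda>_. MX)) (\<lambda>k \<omega>. (Ys k \<omega>, \<lambda>l\<in>{..<N}. Xs k l \<omega>)) {..<Mn}"
    and law: "\<And>h f k. k < Mn \<Longrightarrow> h \<in> borel_measurable MY \<Longrightarrow> (\<exists>B. \<forall>y. \<bar>h y\<bar> \<le> B) \<Longrightarrow>
       (\<forall>l<N. f l \<in> borel_measurable MX \<and> (\<exists>B. \<forall>x. \<bar>f l x\<bar> \<le> B)) \<Longrightarrow>
       (\<integral>\<omega>. h (Ys k \<omega>) * (\<Prod>l<N. f l (Xs k l \<omega>)) \<partial>P) =
       (\<integral>\<omega>. h (Y \<omega>) * (\<Prod>l<N. real_cond_exp M (sigmaY M Y MY) (\<lambda>\<omega>'. f l (X \<omega>')) \<omega>) \<partial>M)"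
    and N: "1 \<le> N" and Mn: "1 \<le> Mn"
    and \<gamma>m: "(\<lambda>z. \<gamma> (fst z) (snd z)) \<in> borel_measurable (MX \<Otimes>\<^sub>M MY)"
    and mgf1: "\<And>t. AE \<omega> in M. nn_cond_exp M (sigmaY M Y MY) (\<lambda>\<omega>'. ennreal (exp (t * \<gamma> (X \<omega>') (Y \<omega>')))) \<omega>
         \<le> ennreal (exp (real_cond_exp M (sigmaY M Y MY) (\<lambda>\<omega>. \<gamma> (X \<omega>) (Y \<omega>)) \<omega> * t + b1\<^sup>2 * t\<^sup>2 / 2))"
    and mgf2: "\<And>t. (\<integral>\<^sup>+ \<omega>. ennreal (exp (t * real_cond_exp M (sigmaY M Y MY) (\<lambda>\<omega>. \<gamma> (X \<omega>) (Y \<omega>)) \<omega>)) \<partial>M)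
         \<le> ennreal (exp (\<mu> * t + b2\<^sup>2 * t\<^sup>2 / 2))"
    and \<mu>\<delta>: "\<delta> < \<mu>" and b: "b1 > 0" "b2 > 0"
  shows "emeasure P {\<omega> \<in> space P. (\<Sum>k<Mn. \<Sum>l<N. \<gamma> (Xs k l \<omega>) (Ys k \<omega>)) \<le> real Mn * real N * \<delta>}
     \<le> ennreal (exp (- real Mn * (\<mu> - \<delta>)\<^sup>2 / (2 * (b1\<^sup>2 / real N + b2\<^sup>2))))"
proof -
  interpret PP: prob_space P by (rule P)
  interpret PM: prob_space M by (rule M)
  let ?r = "real_cond_exp M (sigmaY M Y MY) (\<lambda>\<omega>. \<gamma> (X \<omega>) (Y \<omega>))"
  define c where "c = b1\<^sup>2 / real N + b2\<^sup>2"
  have Npos: "real N > 0" using N by simp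
  have c: "c > 0" using b Npos unfolding c_def by (intro add_pos_pos) auto
  define lam where "lam = (\<mu> - \<delta>) / (real N * c)"
  have lam: "lam > 0" using \<mu>\<delta> c Npos unfolding lam_def by simp
  define B where "B = exp (real N * b1\<^sup>2 * lam\<^sup>2 / 2 + (\<mu> * (- (real N * lam)) + b2\<^sup>2 * (- (real N * lam))\<^sup>2 / 2))"
  define Z where "Z k \<omega> = (\<Prod>l<N. ennreal (exp ((-lam) * \<gamma> (Xs k l \<omega>) (Ys k \<omega>))))" for k \<omega>
  have \<gamma>P: "\<And>k l. k < Mn \<Longrightarrow> l < N \<Longrightarrow> (\<lambda>\<omega>. \<gamma> (Xs k l \<omega>) (Ys k \<omega>)) \<in> borel_measurable P"
    by (rule gamma_comp[OF \<gamma>m Xs Ys])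
  have Zm: "Z k \<in> borel_measurable P" if "k < Mn" for k
    unfolding Z_def using \<gamma>P that by (intro borel_measurable_prod_ennreal) auto
  have blockZ: "(\<integral>\<^sup>+\<omega>. Z k \<omega> \<partial>P) \<le> ennreal B" if k: "k < Mn" for k
  proof -
    interpret B: blk M MX MY X Y P N "Ys k" "\<lambda>l. Xs k (min l (N - 1))"
    proof (intro blk.intro)
      show "prob_space M" "X \<in> measurable M MX" "Y \<in> measurable M MY" "prob_space P" "Ys k \<in> measurable P MY"
        using M X Y P Ys k by auto
      show "Xs k (min l (N - 1)) \<in> measurable P MX" for l using Xs k N by simp
      fix h :: "'y \<Rightarrow> real" and f :: "nat \<Rightarrow> 'x \<Rightarrow> real" assume h: "h \<in> borel_measurable MY" "\<exists>B. \<forall>y. \<bar>h y\<bar> \<le> B"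
        and f: "\<forall>l<N. f l \<in> borel_measurable MX \<and> (\<exists>B. \<forall>x. \<bar>f l x\<bar> \<le> B)"
      have "(\<integral>\<omega>. h (Ys k \<omega>) * (\<Prod>l<N. f l (Xs k (min l (N - 1)) \<omega>)) \<partial>P) = (\<integral>\<omega>. h (Ys k \<omega>) * (\<Prod>l<N. f l (Xs k l \<omega>)) \<partial>P)"
        by (intro Bochner_Integration.integral_cong refl arg_cong2[where f="(*)"] prod.cong) auto
      also have "\<dots> = (\<integral>\<omega>. h (Y \<omega>) * (\<Prod>l<N. real_cond_exp M (sigmaY M Y MY) (\<lambda>\<omega>'. f l (X \<omega>')) \<omega>) \<partial>M)"
        by (rule law[OF k h f])
      finally show "(\<integral>\<omega>. h (Ys k \<omega>) * (\<Prod>l<N. f l (Xs k (min l (N - 1)) \<omega>)) \<partial>P) = (\<integral>\<omega>. h (Y \<omega>) * (\<Prod>l<N. real_cond_exp M (sigmaY M Y MY) (\<lambda>\<omega>'. f l (X \<omega>')) \<omega>) \<partial>M)" .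
    qed
    define \<phi>0 where "\<phi>0 z = exp ((-lam) * \<gamma> (fst z) (snd z))" for z
    have \<phi>0m: "\<phi>0 \<in> borel_measurable (MX \<Otimes>\<^sub>M MY)" unfolding \<phi>0_def using \<gamma>m by measurable
    have eq1: "(\<lambda>\<omega>. ennreal (\<phi>0 (X \<omega>, Y \<omega>))) = (\<lambda>\<omega>'. ennreal (exp ((-lam) * \<gamma> (X \<omega>') (Y \<omega>'))))"
      by (simp add: \<phi>0_def)
    have "(\<integral>\<^sup>+\<omega>. Z k \<omega> \<partial>P) = (\<integral>\<^sup>+\<omega>. (\<Prod>l<N. ennreal (\<phi>0 (Xs k (min l (N - 1)) \<omega>, Ys k \<omega>))) \<partial>P)"
      unfolding Z_def \<phi>0_def by (intro nn_integral_cong prod.cong) auto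
    also have "\<dots> \<le> (\<integral>\<^sup>+\<omega>. (\<Prod>l<N. nn_cond_exp M (sigmaY M Y MY) (\<lambda>\<omega>. ennreal (\<phi>0 (X \<omega>, Y \<omega>))) \<omega>) \<partial>M)"
      by (rule B.block[OF \<phi>0m]) (simp add: \<phi>0_def)
    also have "\<dots> \<le> (\<integral>\<^sup>+\<omega>. ennreal (exp (real N * b1\<^sup>2 * lam\<^sup>2 / 2)) * ennreal (exp ((- (real N * lam)) * ?r \<omega>)) \<partial>M)"
    proof (rule nn_integral_mono_AE)
      show "AE \<omega> in M. (\<Prod>l<N. nn_cond_exp M (sigmaY M Y MY) (\<lambda>\<omega>. ennreal (\<phi>0 (X \<omega>, Y \<omega>))) \<omega>)
          \<le> ennreal (exp (real N * b1\<^sup>2 * lam\<^sup>2 / 2)) * ennreal (exp ((- (real N * lam)) * ?r \<omega>))"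
        using mgf1[of "-lam"]
      proof eventually_elim
        case (elim \<omega>)
        let ?a = "?r \<omega> * (-lam) + b1\<^sup>2 * (-lam)\<^sup>2 / 2"
        have "(\<Prod>l<N. nn_cond_exp M (sigmaY M Y MY) (\<lambda>\<omega>. ennreal (\<phi>0 (X \<omega>, Y \<omega>))) \<omega>) \<le> (\<Prod>l<N. ennreal (exp ?a))"
          by (intro prod_mono_ennreal) (use elim in \<open>simp add: eq1\<close>)
        also have "\<dots> = ennreal (exp ?a ^ N)" by (simp add: ennreal_power)
        also have "exp ?a ^ N = exp (real N * ?a)" by (rule exp_of_nat_mult[symmetric])
        also have "real N * ?a = real N * b1\<^sup>2 * lam\<^sup>2 / 2 + (- (real N * lam)) * ?r \<omega>"
          by (simp add: algebra_simps power2_eq_square)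
        also have "ennreal (exp \<dots>) = ennreal (exp (real N * b1\<^sup>2 * lam\<^sup>2 / 2)) * ennreal (exp ((- (real N * lam)) * ?r \<omega>))"
          by (rule ennreal_exp_add)
        finally show ?case .
      qed
    qed
    also have "\<dots> = ennreal (exp (real N * b1\<^sup>2 * lam\<^sup>2 / 2)) * (\<integral>\<^sup>+\<omega>. ennreal (exp ((- (real N * lam)) * ?r \<omega>)) \<partial>M)"
      by (rule nn_integral_cmult) simp
    also have "\<dots> \<le> ennreal (exp (real N * b1\<^sup>2 * lam\<^sup>2 / 2)) * ennreal (exp (\<mu> * (- (real N * lam)) + b2\<^sup>2 * (- (real N * lam))\<^sup>2 / 2))"
      by (intro mult_left_mono mgf2) simp
    also have "\<dots> = ennreal B"
      unfolding B_def by (rule ennreal_exp_add[symmetric])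
    finally show ?thesis .
  qed
  define \<Psi> where "\<Psi> p = (\<Prod>l<N. ennreal (exp ((-lam) * \<gamma> (snd p l) (fst p))))" for p :: "'y \<times> (nat \<Rightarrow> 'x)"
  have \<Psi>m: "\<Psi> \<in> borel_measurable (MY \<Otimes>\<^sub>M PiM {..<N} (\<lambda>_. MX))"
    unfolding \<Psi>_def
  proof (intro borel_measurable_prod_ennreal)
    fix l assume "l \<in> {..<N}"
    then have "(\<lambda>p. \<gamma> (snd p l) (fst p)) \<in> borel_measurable (MY \<Otimes>\<^sub>M PiM {..<N} (\<lambda>_. MX))"
      by (intro gamma_comp[OF \<gamma>m] measurable_compose[OF measurable_snd measurable_component_singleton] measurable_fst)
    then show "(\<lambda>p. ennreal (exp ((-lam) * \<gamma> (snd p l) (fst p)))) \<in> borel_measurable (MY \<Otimes>\<^sub>M PiM {..<N} (\<lambda>_. MX))"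
      by measurable
  qed
  have indZ: "PP.indep_vars (\<lambda>_. borel) Z {..<Mn}"
  proof -
    have "PP.indep_vars (\<lambda>_. borel) (\<lambda>k \<omega>. \<Psi> (Ys k \<omega>, \<lambda>l\<in>{..<N}. Xs k l \<omega>)) {..<Mn}"
      by (rule PP.indep_vars_compose2[OF ind]) (rule \<Psi>m)
    moreover have "(\<lambda>\<omega>. \<Psi> (Ys k \<omega>, \<lambda>l\<in>{..<N}. Xs k l \<omega>)) = Z k" for k
      unfolding \<Psi>_def Z_def by (intro ext prod.cong) auto
    ultimately show ?thesis by simp
  qed
  have prodZ: "(\<integral>\<^sup>+\<omega>. (\<Prod>k<Mn. Z k \<omega>) \<partial>P) = (\<Prod>k<Mn. \<integral>\<^sup>+\<omega>. Z k \<omega> \<partial>P)"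
    by (rule PP.indep_vars_nn_integral) (auto simp: indZ)
  define D where "D \<omega> = (\<Sum>k<Mn. \<Sum>l<N. \<gamma> (Xs k l \<omega>) (Ys k \<omega>))" for \<omega>
  have Dm[measurable]: "D \<in> borel_measurable P"
    unfolding D_def using \<gamma>P by (intro borel_measurable_sum) auto
  have eZ: "ennreal (exp ((-lam) * D \<omega>)) = (\<Prod>k<Mn. Z k \<omega>)" for \<omega>
  proof -
    have "exp ((-lam) * D \<omega>) = (\<Prod>k<Mn. \<Prod>l<N. exp ((-lam) * \<gamma> (Xs k l \<omega>) (Ys k \<omega>)))"
      unfolding D_def by (simp add: sum_distrib_left exp_sum)
    then show ?thesis unfolding Z_def
      by (simp add: prod_ennreal prod_nonneg)
  qed
  let ?A = "{\<omega> \<in> space P. D \<omega> \<le> real Mn * real N * \<delta>}"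
  have Am: "?A \<in> sets P" by measurable
  have "emeasure P ?A = (\<integral>\<^sup>+\<omega>. indicator ?A \<omega> \<partial>P)" using Am by simp
  also have "\<dots> \<le> (\<integral>\<^sup>+\<omega>. ennreal (exp (lam * (real Mn * real N * \<delta>))) * ennreal (exp ((-lam) * D \<omega>)) \<partial>P)"
  proof (intro nn_integral_mono)
    fix \<omega>
    have "indicator ?A \<omega> \<le> ennreal (exp (lam * (real Mn * real N * \<delta>) + (-lam) * D \<omega>))"
    proof (cases "\<omega> \<in> ?A")
      case True
      then have "0 \<le> lam * (real Mn * real N * \<delta>) + (-lam) * D \<omega>"
        using lam by (simp add: algebra_simps mult_left_mono)
      then show ?thesis using True by simp
    qed simp
    moreover have "ennreal (exp (x + y)) = ennreal (exp x) * ennreal (exp y)" for x y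
      by (simp add: exp_add ennreal_mult)
    ultimately show "indicator ?A \<omega> \<le> ennreal (exp (lam * (real Mn * real N * \<delta>))) * ennreal (exp ((-lam) * D \<omega>))"
      by metis
  qed
  also have "\<dots> = ennreal (exp (lam * (real Mn * real N * \<delta>))) * (\<integral>\<^sup>+\<omega>. ennreal (exp ((-lam) * D \<omega>)) \<partial>P)"
    by (rule nn_integral_cmult) simp
  also have "\<dots> = ennreal (exp (lam * (real Mn * real N * \<delta>))) * (\<Prod>k<Mn. \<integral>\<^sup>+\<omega>. Z k \<omega> \<partial>P)"
    unfolding eZ prodZ ..
  also have "\<dots> \<le> ennreal (exp (lam * (real Mn * real N * \<delta>))) * (\<Prod>k<Mn. ennreal B)"
    using blockZ by (intro mult_left_mono prod_mono_ennreal) auto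
  also have "(\<Prod>k<Mn. ennreal B) = ennreal (B ^ Mn)" using ennreal_power[of B Mn] by (simp add: B_def)
  also have "ennreal (exp (lam * (real Mn * real N * \<delta>))) * ennreal (B ^ Mn) = ennreal (exp (lam * (real Mn * real N * \<delta>)) * B ^ Mn)"
    by (rule ennreal_mult[symmetric]) (auto simp: B_def)
  also have "exp (lam * (real Mn * real N * \<delta>)) * B ^ Mn = exp (- real Mn * (\<mu> - \<delta>)\<^sup>2 / (2 * (b1\<^sup>2 / real N + b2\<^sup>2)))"
  proof -
    define u where "u = real N * lam"
    have u: "u = (\<mu> - \<delta>) / c" unfolding u_def lam_def using Npos by simp
    have e1: "real N * b1\<^sup>2 * lam\<^sup>2 / 2 + b2\<^sup>2 * u\<^sup>2 / 2 = u\<^sup>2 * c / 2"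
      unfolding u_def c_def using Npos by (simp add: field_simps power2_eq_square)
    have s1: "b2\<^sup>2 * (- (real N * lam))\<^sup>2 / 2 = b2\<^sup>2 * u\<^sup>2 / 2" by (simp add: u_def)
    have s2: "\<mu> * (- (real N * lam)) = - (\<mu> * u)" by (simp add: u_def)
    have ex: "real N * b1\<^sup>2 * lam\<^sup>2 / 2 + (\<mu> * (- (real N * lam)) + b2\<^sup>2 * (- (real N * lam))\<^sup>2 / 2) = u\<^sup>2 * c / 2 - \<mu> * u"
      using e1 s1 s2 by linarith
    have "B ^ Mn = exp (real Mn * (u\<^sup>2 * c / 2 - \<mu> * u))"
      unfolding B_def ex by (rule exp_of_nat_mult[symmetric])
    moreover have "lam * (real Mn * real N * \<delta>) = real Mn * (u * \<delta>)" by (simp add: u_def)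
    ultimately have "exp (lam * (real Mn * real N * \<delta>)) * B ^ Mn = exp (real Mn * (u * \<delta>) + real Mn * (u\<^sup>2 * c / 2 - \<mu> * u))"
      by (simp add: exp_add)
    also have "real Mn * (u * \<delta>) + real Mn * (u\<^sup>2 * c / 2 - \<mu> * u) = - real Mn * (\<mu> - \<delta>)\<^sup>2 / (2 * c)"
      unfolding u using c by (simp add: field_simps power2_eq_square)
    finally show ?thesis unfolding c_def .
  qed
  finally show ?thesis unfolding D_def .
qed



theorem mainTheorem3:
  fixes M :: "'w measure" and MX :: "'x measure" and MY :: "'y measure"
    and X :: "'w \<Rightarrow> 'x" and Y :: "'w \<Rightarrow> 'y"
    and \<Theta> :: "(real ^ 'd) set" and g :: "real ^ 'd \<Rightarrow> 'x \<Rightarrow> 'y \<Rightarrow> real"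
    and E :: "(real ^ 'd) set" and \<delta> \<epsilon> b1 b2 :: real
  assumes M: "prob_space M"
    and X: "X \<in> measurable M MX" and Y: "Y \<in> measurable M MY"
    and g_meas: "(\<lambda>(\<theta>, x, y). g \<theta> x y) \<in> borel_measurable (restrict_space borel \<Theta> \<Otimes>\<^sub>M (MX \<Otimes>\<^sub>M MY))"
    and g_int: "\<And>\<theta>. \<theta> \<in> \<Theta> \<Longrightarrow> integrable M (\<lambda>\<omega>. g \<theta> (X \<omega>) (Y \<omega>))"
    and E: "finite E" "E \<noteq> {}" "E \<subseteq> \<Theta>"
    and \<delta>\<epsilon>: "0 < \<delta>" "\<delta> < \<epsilon>"
    and nonopt: "E - eps_opt (Gfun M X Y g) \<epsilon> E \<noteq> {}"
    and b: "b1 > 0" "b2 > 0"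
    and mgf1: "\<And>t \<theta> \<theta>'. \<theta> \<in> E \<Longrightarrow> \<theta>' \<in> E \<Longrightarrow>
       AE \<omega> in M. nn_cond_exp M (sigmaY M Y MY) (\<lambda>\<omega>'. ennreal (exp (t * Gam X Y g \<theta> \<theta>' \<omega>'))) \<omega>
         \<le> ennreal (exp (real_cond_exp M (sigmaY M Y MY) (Gam X Y g \<theta> \<theta>') \<omega> * t + b1\<^sup>2 * t\<^sup>2 / 2))"
    and mgf2: "\<And>t \<theta> \<theta>'. \<theta> \<in> E \<Longrightarrow> \<theta>' \<in> E \<Longrightarrow>
       (\<integral>\<^sup>+ \<omega>. ennreal (exp (t * real_cond_exp M (sigmaY M Y MY) (Gam X Y g \<theta> \<theta>') \<omega>)) \<partial>M)
         \<le> ennreal (exp ((\<integral>\<omega>. Gam X Y g \<theta> \<theta>' \<omega> \<partial>M) * t + b2\<^sup>2 * t\<^sup>2 / 2))"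
  shows "\<forall>(Mn::nat) (N::nat) (P :: 'p measure) Ys Xs.
           Mn \<ge> 1 \<longrightarrow> N \<ge> 1 \<longrightarrow> hier_sample M MX MY X Y P Mn N Ys Xs \<longrightarrow>
           measure P {\<omega> \<in> space P. \<not> (eps_opt (Ghat Mn N Ys Xs g \<omega>) \<delta> E \<subseteq> eps_opt (Gfun M X Y g) \<epsilon> E)}
             < real (card E) * exp (- real Mn * (\<epsilon> - \<delta>)\<^sup>2 / (2 * (b1\<^sup>2 / real N + b2\<^sup>2)))"
proof (intro allI impI)
  fix Mn N :: nat and P :: "'p measure" and Ys :: "nat \<Rightarrow> 'p \<Rightarrow> 'y" and Xs :: "nat \<Rightarrow> nat \<Rightarrow> 'p \<Rightarrow> 'x"
  assume Mn: "Mn \<ge> 1" and N: "N \<ge> 1" and hs: "hier_sample M MX MY X Y P Mn N Ys Xs"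
  note hs' = hs[unfolded hier_sample_def]
  have P: "prob_space P" using hs' by blast
  interpret PP: prob_space P by (rule P)
  interpret PM: prob_space M by (rule M)
  have Ys: "\<And>k. k < Mn \<Longrightarrow> Ys k \<in> measurable P MY" using hs' by blast
  have Xs: "\<And>k l. k < Mn \<Longrightarrow> l < N \<Longrightarrow> Xs k l \<in> measurable P MX" using hs' by blast
  have ind: "prob_space.indep_vars P (\<lambda>k. MY \<Otimes>\<^sub>M PiM {..<N} (\<lambda>_. MX)) (\<lambda>k \<omega>. (Ys k \<omega>, \<lambda>l\<in>{..<N}. Xs k l \<omega>)) {..<Mn}"
    using hs' by blast
  have law: "\<And>h f k. k < Mn \<Longrightarrow> h \<in> borel_measurable MY \<Longrightarrow> (\<exists>B. \<forall>y. \<bar>h y\<bar> \<le> B) \<Longrightarrow>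
       (\<forall>l<N. f l \<in> borel_measurable MX \<and> (\<exists>B. \<forall>x. \<bar>f l x\<bar> \<le> B)) \<Longrightarrow>
       (\<integral>\<omega>. h (Ys k \<omega>) * (\<Prod>l<N. f l (Xs k l \<omega>)) \<partial>P) =
       (\<integral>\<omega>. h (Y \<omega>) * (\<Prod>l<N. real_cond_exp M (sigmaY M Y MY) (\<lambda>\<omega>'. f l (X \<omega>')) \<omega>) \<partial>M)"
    using hs' by blast
  let ?G = "Gfun M X Y g"
  let ?S = "eps_opt (Gfun M X Y g) \<epsilon> E"
  let ?c = "b1\<^sup>2 / real N + b2\<^sup>2"
  have cpos: "?c > 0" using b N by (intro add_pos_pos) auto
  have gm: "(\<lambda>z. g \<theta> (fst z) (snd z)) \<in> borel_measurable (MX \<Otimes>\<^sub>M MY)" if "\<theta> \<in> \<Theta>" for \<theta>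
  proof -
    have "(\<lambda>z. (\<theta>, z)) \<in> measurable (MX \<Otimes>\<^sub>M MY) (restrict_space borel \<Theta> \<Otimes>\<^sub>M (MX \<Otimes>\<^sub>M MY))"
      using that by (intro measurable_Pair measurable_const measurable_ident_sets) (auto simp: space_restrict_space)
    from measurable_compose[OF this g_meas] show ?thesis by (simp add: case_prod_beta)
  qed
  have "Min (?G ` E) \<in> ?G ` E" using E by (intro Min_in) auto
  then obtain \<theta>s where \<theta>s: "\<theta>s \<in> E" "?G \<theta>s = Min (?G ` E)" by (metis imageE)
  define \<gamma> where "\<gamma> \<theta> x y = g \<theta> x y - g \<theta>s x y" for \<theta> x y
  define \<mu> where "\<mu> \<theta> = (\<integral>\<omega>. g \<theta> (X \<omega>) (Y \<omega>) - g \<theta>s (X \<omega>) (Y \<omega>) \<partial>M)" for \<theta>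
  define D where "D \<theta> \<omega> = (\<Sum>k<Mn. \<Sum>l<N. \<gamma> \<theta> (Xs k l \<omega>) (Ys k \<omega>))" for \<theta> \<omega>
  define A where "A \<theta> = {\<omega> \<in> space P. D \<theta> \<omega> \<le> real Mn * real N * \<delta>}" for \<theta>
  have \<gamma>m: "(\<lambda>z. \<gamma> \<theta> (fst z) (snd z)) \<in> borel_measurable (MX \<Otimes>\<^sub>M MY)" if "\<theta> \<in> E" for \<theta>
    unfolding \<gamma>_def using gm[of \<theta>] gm[of \<theta>s] that \<theta>s E(3) by (intro borel_measurable_diff) auto
  have Am: "A \<theta> \<in> sets P" if "\<theta> \<in> E" for \<theta>
  proof -
    have "D \<theta> \<in> borel_measurable P"
      unfolding D_def using gamma_comp[OF \<gamma>m[OF that] Xs Ys] by (intro borel_measurable_sum) auto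
    then show ?thesis unfolding A_def by measurable
  qed
  have \<mu>G: "\<mu> \<theta> = ?G \<theta> - ?G \<theta>s" if "\<theta> \<in> E" for \<theta>
    unfolding \<mu>_def Gfun_def using that \<theta>s E(3) g_int by (intro Bochner_Integration.integral_diff) auto
  have \<mu>gt: "\<mu> \<theta> > \<epsilon>" if "\<theta> \<in> E - ?S" for \<theta>
    using that \<mu>G[of \<theta>] \<theta>s unfolding eps_opt_def by auto
  have Abound: "measure P (A \<theta>) \<le> exp (- real Mn * (\<mu> \<theta> - \<delta>)\<^sup>2 / (2 * ?c))" if th: "\<theta> \<in> E - ?S" for \<theta>
  proof -
    have thE: "\<theta> \<in> E" using th by auto
    have "emeasure P (A \<theta>) \<le> ennreal (exp (- real Mn * (\<mu> \<theta> - \<delta>)\<^sup>2 / (2 * ?c)))"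
      unfolding A_def D_def
    proof (rule chernoff[where \<gamma>="\<gamma> \<theta>", OF M X Y P Ys Xs ind law N Mn \<gamma>m[OF thE]])
      show "\<And>t. AE \<omega> in M. nn_cond_exp M (sigmaY M Y MY) (\<lambda>\<omega>'. ennreal (exp (t * \<gamma> \<theta> (X \<omega>') (Y \<omega>')))) \<omega>
         \<le> ennreal (exp (real_cond_exp M (sigmaY M Y MY) (\<lambda>\<omega>. \<gamma> \<theta> (X \<omega>) (Y \<omega>)) \<omega> * t + b1\<^sup>2 * t\<^sup>2 / 2))"
        unfolding \<gamma>_def using mgf1[OF \<theta>s(1) thE, unfolded Gam_def[abs_def]] .
      show "\<And>t. (\<integral>\<^sup>+ \<omega>. ennreal (exp (t * real_cond_exp M (sigmaY M Y MY) (\<lambda>\<omega>. \<gamma> \<theta> (X \<omega>) (Y \<omega>)) \<omega>)) \<partial>M)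
         \<le> ennreal (exp (\<mu> \<theta> * t + b2\<^sup>2 * t\<^sup>2 / 2))"
        unfolding \<gamma>_def \<mu>_def using mgf2[OF \<theta>s(1) thE, unfolded Gam_def[abs_def]] .
      show "\<delta> < \<mu> \<theta>" using \<mu>gt[OF th] \<delta>\<epsilon> by simp
    qed (use b in auto)
    then show ?thesis using PP.emeasure_eq_measure by (simp add: ennreal_le_iff)
  qed
  have strict: "exp (- real Mn * (\<mu> \<theta> - \<delta>)\<^sup>2 / (2 * ?c)) < exp (- real Mn * (\<epsilon> - \<delta>)\<^sup>2 / (2 * ?c))"
    if th: "\<theta> \<in> E - ?S" for \<theta>
  proof -
    have "(\<epsilon> - \<delta>)\<^sup>2 < (\<mu> \<theta> - \<delta>)\<^sup>2"
      using \<mu>gt[OF th] \<delta>\<epsilon> by (intro power_strict_mono) auto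
    then have "real Mn * (\<epsilon> - \<delta>)\<^sup>2 < real Mn * (\<mu> \<theta> - \<delta>)\<^sup>2" using Mn by simp
    then have "real Mn * (\<epsilon> - \<delta>)\<^sup>2 / (2 * ?c) < real Mn * (\<mu> \<theta> - \<delta>)\<^sup>2 / (2 * ?c)"
      using cpos by (intro divide_strict_right_mono) auto
    then show ?thesis by simp
  qed
  have sub: "{\<omega> \<in> space P. \<not> (eps_opt (Ghat Mn N Ys Xs g \<omega>) \<delta> E \<subseteq> ?S)} \<subseteq> (\<Union>\<theta>\<in>E - ?S. A \<theta>)"
  proof
    fix \<omega> assume \<omega>: "\<omega> \<in> {\<omega> \<in> space P. \<not> (eps_opt (Ghat Mn N Ys Xs g \<omega>) \<delta> E \<subseteq> ?S)}"
    then obtain \<theta> where th1: "\<theta> \<in> eps_opt (Ghat Mn N Ys Xs g \<omega>) \<delta> E" and th2: "\<theta> \<notin> ?S" by auto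
    let ?H = "Ghat Mn N Ys Xs g \<omega>"
    have thE: "\<theta> \<in> E" and le: "?H \<theta> \<le> Min (?H ` E) + \<delta>" using th1 unfolding eps_opt_def by auto
    have "Min (?H ` E) \<le> ?H \<theta>s" using \<theta>s(1) E(1) by (intro Min_le) auto
    with le have le2: "?H \<theta> - ?H \<theta>s \<le> \<delta>" by simp
    have "?H \<theta> - ?H \<theta>s = D \<theta> \<omega> / (real Mn * real N)"
      unfolding Ghat_def D_def \<gamma>_def by (simp add: sum_subtractf diff_divide_distrib)
    with le2 have "D \<theta> \<omega> / (real Mn * real N) \<le> \<delta>" by simp
    then have "D \<theta> \<omega> \<le> real Mn * real N * \<delta>" using Mn N by (simp add: divide_le_eq mult.commute)
    then show "\<omega> \<in> (\<Union>\<theta>\<in>E - ?S. A \<theta>)" using \<omega> thE th2 unfolding A_def by auto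
  qed
  have fin: "finite (E - ?S)" using E(1) by simp
  have "measure P {\<omega> \<in> space P. \<not> (eps_opt (Ghat Mn N Ys Xs g \<omega>) \<delta> E \<subseteq> ?S)} \<le> measure P (\<Union>\<theta>\<in>E - ?S. A \<theta>)"
    using sub fin Am by (intro PP.finite_measure_mono sets.finite_UN) auto
  also have "\<dots> \<le> (\<Sum>\<theta>\<in>E - ?S. measure P (A \<theta>))"
    using fin Am by (intro PP.finite_measure_subadditive_finite) auto
  also have "\<dots> \<le> (\<Sum>\<theta>\<in>E - ?S. exp (- real Mn * (\<mu> \<theta> - \<delta>)\<^sup>2 / (2 * ?c)))"
    by (intro sum_mono Abound)
  also have "\<dots> < (\<Sum>\<theta>\<in>E - ?S. exp (- real Mn * (\<epsilon> - \<delta>)\<^sup>2 / (2 * ?c)))"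
    using fin nonopt strict by (intro sum_strict_mono) auto
  also have "\<dots> = real (card (E - ?S)) * exp (- real Mn * (\<epsilon> - \<delta>)\<^sup>2 / (2 * ?c))" by simp
  also have "\<dots> \<le> real (card E) * exp (- real Mn * (\<epsilon> - \<delta>)\<^sup>2 / (2 * ?c))"
    using E(1) by (intro mult_right_mono) (auto intro: card_mono)
  finally show "measure P {\<omega> \<in> space P. \<not> (eps_opt (Ghat Mn N Ys Xs g \<omega>) \<delta> E \<subseteq> ?S)}
      < real (card E) * exp (- real Mn * (\<epsilon> - \<delta>)\<^sup>2 / (2 * ?c))" .
qed

end
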